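(* Let $\alpha:\mathbb{C}\to\mathbb{C}$ be an exponential automorphism, i.e. a function satisfying $\alpha(z_1+z_2)=\alpha(z_1)+\alpha(z_2)$ and $\alpha(e^z)=e^{\alpha(z)}$ for all $z,z_1,z_2\in\mathbb{C}$. Then $\alpha$ is a field automorphism of $\mathbb{C}$, i.e. $\alpha(z_1+z_2)=\alpha(z_1)+\alpha(z_2)$, $\alpha(z_1z_2)=\alpha(z_1)\alpha(z_2)$ for all $z_1,z_2\in\mathbb{C}$, and $\alpha(1)=1$. *)

theory Defs
  imports Complex_Main
begin

end

theory Submission
  imports Defs "HOL-Analysis.Complex_Transcendental"
begin

theorem mainTheorem3:
  fixes \<alpha> :: "complex \<Rightarrow> complex"
  assumes add: "\<And>z1 z2. \<alpha> (z1 + z2) = \<alpha> z1 + \<alpha> z2"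
    and expc: "\<And>z. \<alpha> (exp z) = exp (\<alpha> z)"
  shows "(\<forall>z1 z2. \<alpha> (z1 + z2) = \<alpha> z1 + \<alpha> z2) \<and>
         (\<forall>z1 z2. \<alpha> (z1 * z2) = \<alpha> z1 * \<alpha> z2) \<and>
         \<alpha> 1 = 1"
proof -
  have a0: "\<alpha> 0 = 0" using add[of 0 0] by simp
  have a1: "\<alpha> 1 = 1" using expc[of 0] a0 by simp
  have m: "\<alpha> (z1 * z2) = \<alpha> z1 * \<alpha> z2" for z1 z2
  proof (cases "z1 = 0 \<or> z2 = 0")
    case True then show ?thesis using a0 by auto
  next
    case False
    then have e1: "exp (Ln z1) = z1" and e2: "exp (Ln z2) = z2" by auto
    have "\<alpha> (z1 * z2) = \<alpha> (exp (Ln z1 + Ln z2))" using e1 e2 by (simp add: exp_add)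
    also have "\<dots> = exp (\<alpha> (Ln z1)) * exp (\<alpha> (Ln z2))" by (metis expc add exp_add)
    also have "\<dots> = \<alpha> z1 * \<alpha> z2" using e1 e2 expc by metis
    finally show ?thesis .
  qed
  show ?thesis using add m a1 by blast
qed

end
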